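(* The class of coherent compact spaces is not $\omega$-projective: there is a projective system of coherent compact topological spaces, indexed by a directed preordered set with a countable cofinal subset, whose projective limit in the category of topological spaces is not coherent (hence not a coherent compact space).
   Context: A projective system of topological spaces consists of a directed preordered set $(I,\sqsubseteq)$, spaces $X_i$ and continuous maps $p_{ij}\colon X_j\to X_i$ for $i\sqsubseteq j$ with $p_{ii}=\mathrm{id}$ and $p_{ij}\circ p_{jk}=p_{ik}$; its projective limit is its limit in the category of topological spaces. A space is coherent if the intersection of any two compact saturated subsets is compact (saturated = upward closed in the specialization preorder; compactness assumes no separation axiom). *)

theory Defs
  imports "HOL-Analysis.Analysis"
begin

definition specializes :: "'a topology \<Rightarrow> 'a \<Rightarrow> 'a \<Rightarrow> bool" where
  "specializes X x y \<longleftrightarrow> x \<in> topspace X \<and> y \<in> topspace X \<and>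
     (\<forall>U. openin X U \<and> x \<in> U \<longrightarrow> y \<in> U)"

definition saturated_in :: "'a topology \<Rightarrow> 'a set \<Rightarrow> bool" where
  "saturated_in X S \<longleftrightarrow> S \<subseteq> topspace X \<and>
     (\<forall>x y. x \<in> S \<and> specializes X x y \<longrightarrow> y \<in> S)"

definition coherent_space :: "'a topology \<Rightarrow> bool" where
  "coherent_space X \<longleftrightarrow>
     (\<forall>K L. compactin X K \<and> saturated_in X K \<and> compactin X L \<and> saturated_in X L
        \<longrightarrow> compactin X (K \<inter> L))"

definition directed_preorder_on :: "'i set \<Rightarrow> ('i \<Rightarrow> 'i \<Rightarrow> bool) \<Rightarrow> bool" where
  "directed_preorder_on I le \<longleftrightarrow>
     I \<noteq> {} \<and>
     (\<forall>i\<in>I. le i i) \<and>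
     (\<forall>i\<in>I. \<forall>j\<in>I. \<forall>k\<in>I. le i j \<and> le j k \<longrightarrow> le i k) \<and>
     (\<forall>i\<in>I. \<forall>j\<in>I. \<exists>k\<in>I. le i k \<and> le j k)"

definition has_countable_cofinal_subset :: "'i set \<Rightarrow> ('i \<Rightarrow> 'i \<Rightarrow> bool) \<Rightarrow> bool" where
  "has_countable_cofinal_subset I le \<longleftrightarrow>
     (\<exists>C. C \<subseteq> I \<and> countable C \<and> (\<forall>i\<in>I. \<exists>c\<in>C. le i c))"

definition projective_system ::
  "'i set \<Rightarrow> ('i \<Rightarrow> 'i \<Rightarrow> bool) \<Rightarrow> ('i \<Rightarrow> 'a topology) \<Rightarrow> ('i \<Rightarrow> 'i \<Rightarrow> 'a \<Rightarrow> 'a) \<Rightarrow> bool" where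
  "projective_system I le X p \<longleftrightarrow>
     directed_preorder_on I le \<and>
     (\<forall>i\<in>I. \<forall>j\<in>I. le i j \<longrightarrow> continuous_map (X j) (X i) (p i j)) \<and>
     (\<forall>i\<in>I. \<forall>x\<in>topspace (X i). p i i x = x) \<and>
     (\<forall>i\<in>I. \<forall>j\<in>I. \<forall>k\<in>I. le i j \<and> le j k \<longrightarrow>
        (\<forall>x\<in>topspace (X k). p i j (p j k x) = p i k x))"

definition projective_limit ::
  "'i set \<Rightarrow> ('i \<Rightarrow> 'i \<Rightarrow> bool) \<Rightarrow> ('i \<Rightarrow> 'a topology) \<Rightarrow> ('i \<Rightarrow> 'i \<Rightarrow> 'a \<Rightarrow> 'a)
     \<Rightarrow> ('i \<Rightarrow> 'a) topology" where
  "projective_limit I le X p =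
     subtopology (product_topology X I)
       {x \<in> topspace (product_topology X I).
          \<forall>i\<in>I. \<forall>j\<in>I. le i j \<longrightarrow> p i j (x j) = x i}"

end

theory Submission
  imports Defs
begin

definition fp :: "nat \<Rightarrow> nat set set" where "fp k = {{k}}"

definition YY :: "nat set set set" where "YY = insert {} (insert {{}} (range fp))"

definition OpN :: "nat \<Rightarrow> nat set set set \<Rightarrow> bool" where
  "OpN n U \<longleftrightarrow> U \<subseteq> YY \<and> (({} \<in> U \<or> {{}} \<in> U \<or> (\<exists>k\<ge>n. fp k \<in> U)) \<longrightarrow> fp ` {n..} \<subseteq> U)"

definition OpT :: "nat set set set \<Rightarrow> bool" where
  "OpT U \<longleftrightarrow> U \<subseteq> YY \<and> (({} \<in> U \<or> {{}} \<in> U) \<longrightarrow> (\<exists>n. fp ` {n..} \<subseteq> U))"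

lemma fp_inj: "fp k = fp l \<longleftrightarrow> k = l" by (auto simp: fp_def)
lemma fp_ne1 [simp]: "fp k \<noteq> {}" and fp_ne2 [simp]: "fp k \<noteq> {{}}"
  by (auto simp: fp_def)
lemma fp_ne1' [simp]: "{} \<noteq> fp k" and fp_ne2' [simp]: "{{}} \<noteq> fp k"
  by (auto simp: fp_def)
lemma ee_ne [simp]: "({}::nat set set) \<noteq> {{}}" by auto

lemma istop_N: "istopology (OpN n)"
  unfolding istopology_def
proof (intro conjI allI impI)
  fix S T assume S: "OpN n S" and T: "OpN n T"
  show "OpN n (S \<inter> T)" unfolding OpN_def
  proof (intro conjI impI)
    show "S \<inter> T \<subseteq> YY" using S by (auto simp: OpN_def)
    assume "{} \<in> S \<inter> T \<or> {{}} \<in> S \<inter> T \<or> (\<exists>k\<ge>n. fp k \<in> S \<inter> T)"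
    then have "{} \<in> S \<or> {{}} \<in> S \<or> (\<exists>k\<ge>n. fp k \<in> S)"
      and "{} \<in> T \<or> {{}} \<in> T \<or> (\<exists>k\<ge>n. fp k \<in> T)" by blast+
    then have "fp ` {n..} \<subseteq> S" "fp ` {n..} \<subseteq> T" using S T unfolding OpN_def by simp_all
    then show "fp ` {n..} \<subseteq> S \<inter> T" by simp
  qed
next
  fix KK assume KK: "\<forall>U\<in>KK. OpN n U"
  have sub: "U \<subseteq> YY" if "U \<in> KK" for U
    using bspec[OF KK that] unfolding OpN_def by (rule conjunct1)
  have imp: "({} \<in> U \<or> {{}} \<in> U \<or> (\<exists>k\<ge>n. fp k \<in> U)) \<longrightarrow> fp ` {n..} \<subseteq> U" if "U \<in> KK" for U
    using bspec[OF KK that] unfolding OpN_def by (rule conjunct2)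
  show "OpN n (\<Union>KK)" unfolding OpN_def
  proof (intro conjI impI)
    show "\<Union>KK \<subseteq> YY" using sub by (rule Union_least)
    assume "{} \<in> \<Union>KK \<or> {{}} \<in> \<Union>KK \<or> (\<exists>k\<ge>n. fp k \<in> \<Union>KK)"
    then obtain U where U: "U \<in> KK" "{} \<in> U \<or> {{}} \<in> U \<or> (\<exists>k\<ge>n. fp k \<in> U)" by blast
    then have "fp ` {n..} \<subseteq> U" using imp by blast
    then show "fp ` {n..} \<subseteq> \<Union>KK" using U(1) by blast
  qed
qed

lemma istop_T: "istopology OpT"
  unfolding istopology_def
proof (intro conjI allI impI)
  fix S T assume S: "OpT S" and T: "OpT T"
  show "OpT (S \<inter> T)" unfolding OpT_def
  proof (intro conjI impI)
    show "S \<inter> T \<subseteq> YY" using S by (auto simp: OpT_def)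
    assume "{} \<in> S \<inter> T \<or> {{}} \<in> S \<inter> T"
    then obtain m n where "fp ` {m..} \<subseteq> S" "fp ` {n..} \<subseteq> T" using S T unfolding OpT_def by blast
    then have "fp ` {max m n..} \<subseteq> S \<inter> T" by auto
    then show "\<exists>n. fp ` {n..} \<subseteq> S \<inter> T" by blast
  qed
next
  fix KK assume KK: "\<forall>U\<in>KK. OpT U"
  have sub: "U \<subseteq> YY" if "U \<in> KK" for U
    using bspec[OF KK that] unfolding OpT_def by (rule conjunct1)
  have imp: "({} \<in> U \<or> {{}} \<in> U) \<longrightarrow> (\<exists>n. fp ` {n..} \<subseteq> U)" if "U \<in> KK" for U
    using bspec[OF KK that] unfolding OpT_def by (rule conjunct2)
  show "OpT (\<Union>KK)" unfolding OpT_def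
  proof (intro conjI impI)
    show "\<Union>KK \<subseteq> YY" using sub by (rule Union_least)
    assume "{} \<in> \<Union>KK \<or> {{}} \<in> \<Union>KK"
    then obtain U where U: "U \<in> KK" "{} \<in> U \<or> {{}} \<in> U" by blast
    then obtain n where "fp ` {n..} \<subseteq> U" using imp by blast
    then show "\<exists>n. fp ` {n..} \<subseteq> \<Union>KK" using U(1) by blast
  qed
qed

definition TN :: "nat \<Rightarrow> nat set set topology" where "TN n = topology (OpN n)"
definition TT :: "nat set set topology" where "TT = topology OpT"

lemma openin_TN [simp]: "openin (TN n) = OpN n"
  by (simp add: TN_def istop_N)
lemma openin_TT [simp]: "openin TT = OpT"
  by (simp add: TT_def istop_T)

lemma OpN_YY: "OpN n YY"
  unfolding OpN_def YY_def by auto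
lemma OpT_YY: "OpT YY"
  unfolding OpT_def YY_def by auto

lemma topspace_TN [simp]: "topspace (TN n) = YY"
  by (metis OpN_YY OpN_def openin_TN openin_subset openin_topspace subset_antisym)
lemma topspace_TT [simp]: "topspace TT = YY"
  by (metis OpT_YY OpT_def openin_TT openin_subset openin_topspace subset_antisym)

lemma OpN_OpT: "OpN n U \<Longrightarrow> OpT U"
  unfolding OpN_def OpT_def by blast

lemma OpN_mono: "i \<le> j \<Longrightarrow> OpN i U \<Longrightarrow> OpN j U"
  unfolding OpN_def by (metis atLeast_iff atLeast_subset_iff image_mono order.trans subset_iff)


lemma compactin_core:
  assumes "S \<subseteq> topspace X" "finite P" "P \<subseteq> S"
    and core: "\<forall>x\<in>S. \<exists>p\<in>P. \<forall>U. openin X U \<and> p \<in> U \<longrightarrow> x \<in> U"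
  shows "compactin X S"
  unfolding compactin_def
proof (intro conjI allI impI)
  show "S \<subseteq> topspace X" by fact
  fix \<U> assume H: "(\<forall>U\<in>\<U>. openin X U) \<and> S \<subseteq> \<Union>\<U>"
  have "\<forall>p\<in>P. \<exists>U\<in>\<U>. p \<in> U" using H assms(3) by blast
  then obtain g where g: "\<And>p. p \<in> P \<Longrightarrow> g p \<in> \<U> \<and> p \<in> g p" by metis
  have "S \<subseteq> \<Union>(g ` P)"
  proof
    fix x assume "x \<in> S"
    then obtain p where "p \<in> P" "\<forall>U. openin X U \<and> p \<in> U \<longrightarrow> x \<in> U" using core by blast
    then show "x \<in> \<Union>(g ` P)" using g H by blast
  qed
  then show "\<exists>\<F>. finite \<F> \<and> \<F> \<subseteq> \<U> \<and> S \<subseteq> \<Union>\<F>"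
    using g assms(2) by (intro exI[of _ "g ` P"]) auto
qed

lemma compactin_TN: assumes "S \<subseteq> YY" shows "compactin (TN n) S"
proof -
  define P0 where "P0 = S \<inter> insert {} (insert {{}} (fp ` {..<n}))"
  have fin0: "finite P0" unfolding P0_def by auto
  show ?thesis
  proof (cases "\<exists>k\<ge>n. fp k \<in> S")
    case True
    then obtain k0 where k0: "k0 \<ge> n" "fp k0 \<in> S" by blast
    show ?thesis
    proof (rule compactin_core[where P = "insert (fp k0) P0"])
      show "S \<subseteq> topspace (TN n)" using assms by simp
      show "finite (insert (fp k0) P0)" using fin0 by simp
      show "insert (fp k0) P0 \<subseteq> S" using k0 unfolding P0_def by blast
      show "\<forall>x\<in>S. \<exists>p\<in>insert (fp k0) P0. \<forall>U. openin (TN n) U \<and> p \<in> U \<longrightarrow> x \<in> U"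
      proof
        fix x assume x: "x \<in> S"
        then have "x \<in> YY" using assms by blast
        have "x \<in> P0 \<or> (\<exists>k\<ge>n. x = fp k)"
        proof -
          from \<open>x \<in> YY\<close> consider "x = {}" | "x = {{}}" | k where "x = fp k" unfolding YY_def by blast
          then show ?thesis
          proof cases
            case (3 k)
            then show ?thesis using x unfolding P0_def by (cases "k < n") (auto simp: not_less)
          qed (use x in \<open>auto simp: P0_def\<close>)
        qed
        then consider "x \<in> P0" | k where "x = fp k" "k \<ge> n" by blast
        then show "\<exists>p\<in>insert (fp k0) P0. \<forall>U. openin (TN n) U \<and> p \<in> U \<longrightarrow> x \<in> U"
        proof cases
          case 1 then show ?thesis by blast
        next
          case 2
          have "\<forall>U. openin (TN n) U \<and> fp k0 \<in> U \<longrightarrow> x \<in> U"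
            using 2 k0 unfolding openin_TN OpN_def by blast
          then show ?thesis by blast
        qed
      qed
    qed
  next
    case False
    show ?thesis
    proof (rule compactin_core[where P = "P0"])
      show "S \<subseteq> topspace (TN n)" using assms by simp
      show "finite P0" using fin0 by simp
      show "P0 \<subseteq> S" unfolding P0_def by blast
      show "\<forall>x\<in>S. \<exists>p\<in>P0. \<forall>U. openin (TN n) U \<and> p \<in> U \<longrightarrow> x \<in> U"
      proof
        fix x assume x: "x \<in> S"
        then have "x \<in> YY" using assms by blast
        then consider "x = {}" | "x = {{}}" | k where "x = fp k" unfolding YY_def by blast
        then have "x \<in> P0"
        proof cases
          case (3 k)
          then show ?thesis using x False unfolding P0_def by (cases "k < n") (auto simp: not_less)
        qed (use x in \<open>auto simp: P0_def\<close>)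
        then show "\<exists>p\<in>P0. \<forall>U. openin (TN n) U \<and> p \<in> U \<longrightarrow> x \<in> U" by blast
      qed
    qed
  qed
qed

lemma compact_TN: "compact_space (TN n)"
  unfolding compact_space_def by (simp add: compactin_TN)

lemma coherent_TN: "coherent_space (TN n)"
  unfolding coherent_space_def
  by (metis compactin_TN compactin_subset_topspace inf.coboundedI1 topspace_TN)

lemma compactin_TT:
  assumes e: "e = {} \<or> e = {{}}"
  shows "compactin TT (insert e (range fp))"
  unfolding compactin_def
proof (intro conjI allI impI)
  show "insert e (range fp) \<subseteq> topspace TT" using e by (auto simp: YY_def)
  fix \<U> assume H: "(\<forall>U\<in>\<U>. openin TT U) \<and> insert e (range fp) \<subseteq> \<Union>\<U>"
  then obtain U0 where U0: "U0 \<in> \<U>" "e \<in> U0" by blast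
  then have "OpT U0" using H by auto
  then obtain n where n: "fp ` {n..} \<subseteq> U0" using U0 e unfolding OpT_def by blast
  have "\<forall>k. \<exists>U\<in>\<U>. fp k \<in> U" using H by blast
  then obtain g where g: "\<And>k. g k \<in> \<U> \<and> fp k \<in> g k" by metis
  have "insert e (range fp) \<subseteq> \<Union>(insert U0 (g ` {..<n}))"
  proof
    fix x assume "x \<in> insert e (range fp)"
    then consider "x = e" | k where "x = fp k" by blast
    then show "x \<in> \<Union>(insert U0 (g ` {..<n}))"
    proof cases
      case 1 then show ?thesis using U0 by blast
    next
      case 2
      show ?thesis
      proof (cases "k < n")
        case True then show ?thesis using g 2 by blast
      next
        case False then show ?thesis using n 2 by (auto simp: not_less)
      qed
    qed
  qed
  then show "\<exists>\<F>. finite \<F> \<and> \<F> \<subseteq> \<U> \<and> insert e (range fp) \<subseteq> \<Union>\<F>"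
    using g U0 by (intro exI[of _ "insert U0 (g ` {..<n})"]) auto
qed

lemma not_compactin_TT: "\<not> compactin TT (range fp)"
proof
  assume "compactin TT (range fp)"
  moreover have "\<forall>U\<in>(\<lambda>k. {fp k}) ` UNIV. openin TT U"
    by (auto simp: OpT_def YY_def)
  moreover have "range fp \<subseteq> \<Union>((\<lambda>k. {fp k}) ` UNIV)" by blast
  ultimately obtain F where F: "finite F" "F \<subseteq> (\<lambda>k. {fp k}) ` UNIV" "range fp \<subseteq> \<Union>F"
    unfolding compactin_def by meson
  then obtain N where N: "finite N" "F = (\<lambda>k. {fp k}) ` N"
    by (meson finite_subset_image)
  have "UNIV \<subseteq> N"
  proof
    fix k :: nat
    have "fp k \<in> \<Union>F" using F by blast
    then show "k \<in> N" using N by (auto simp: fp_inj)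
  qed
  then show False using N(1) infinite_UNIV_nat finite_subset by blast
qed

lemma OpT_ins: assumes "e = {} \<or> e = {{}}" shows "OpT (insert e (fp ` {n..}))"
  unfolding OpT_def
proof (intro conjI impI)
  show "insert e (fp ` {n..}) \<subseteq> YY" using assms unfolding YY_def by blast
  show "\<exists>m. fp ` {m..} \<subseteq> insert e (fp ` {n..})" by (rule exI[of _ n]) blast
qed

lemma OpT_single: "OpT {fp k}"
  unfolding OpT_def YY_def by simp

lemma sep_TT:
  assumes "x \<in> YY" "y \<in> YY" "x \<noteq> y"
  shows "\<exists>U. OpT U \<and> x \<in> U \<and> y \<notin> U"
proof -
  from assms(1) consider "x = {} \<or> x = {{}}" | k where "x = fp k" unfolding YY_def by blast
  then show ?thesis
  proof cases
    case 1
    from assms(2) consider "y = {} \<or> y = {{}}" | k where "y = fp k" unfolding YY_def by blast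
    then show ?thesis
    proof cases
      case a: 1
      have "OpT (insert x (fp ` {0..}))" using 1 by (rule OpT_ins)
      moreover have "y \<notin> fp ` {0..}" using a fp_ne1 fp_ne2 by blast
      then have "y \<notin> insert x (fp ` {0..})" using assms(3) by simp
      ultimately show ?thesis by (intro exI[of _ "insert x (fp ` {0..})"]) simp
    next
      case a: (2 k)
      have "OpT (insert x (fp ` {Suc k..}))" using 1 by (rule OpT_ins)
      have "y \<noteq> x" using a 1 fp_ne1 fp_ne2 by metis
      moreover have "y \<notin> fp ` {Suc k..}" using a by (auto simp: fp_inj)
      ultimately have "y \<notin> insert x (fp ` {Suc k..})" by simp
      with \<open>OpT (insert x (fp ` {Suc k..}))\<close> show ?thesis by (intro exI[of _ "insert x (fp ` {Suc k..})"]) simp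
    qed
  next
    case (2 k)
    have "y \<notin> {fp k}" using 2 assms(3) by simp
    then show ?thesis using 2 OpT_single by (intro exI[of _ "{fp k}"]) simp
  qed
qed

lemma OpT_local:
  assumes "OpT U" "y \<in> U"
  shows "\<exists>n V. OpN n V \<and> y \<in> V \<and> V \<subseteq> U"
proof -
  have "y \<in> YY" using assms unfolding OpT_def by blast
  then consider "y = {} \<or> y = {{}}" | k where "y = fp k" unfolding YY_def by blast
  then show ?thesis
  proof cases
    case 1
    then obtain n where n: "fp ` {n..} \<subseteq> U" using assms unfolding OpT_def by blast
    have "OpN n (insert y (fp ` {n..}))" using 1 unfolding OpN_def YY_def by auto
    then show ?thesis using n assms by blast
  next
    case (2 k)
    have "OpN (Suc k) {fp k}" unfolding OpN_def YY_def by (auto simp: fp_inj)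
    then show ?thesis using 2 assms by blast
  qed
qed

definition LL :: "(nat \<Rightarrow> nat set set) topology" where
  "LL = projective_limit UNIV (\<le>) TN (\<lambda>i j x. x)"

lemma topspace_LL: "topspace LL = {x. \<exists>y\<in>YY. x = (\<lambda>_. y)}"
proof (rule set_eqI)
  fix x :: "nat \<Rightarrow> nat set set"
  have "x \<in> topspace LL \<longleftrightarrow> (\<forall>i. x i \<in> YY) \<and> (\<forall>i j. i \<le> j \<longrightarrow> x j = x i)"
    unfolding LL_def projective_limit_def topspace_subtopology topspace_product_topology
    by (simp add: PiE_iff)
  also have "\<dots> \<longleftrightarrow> (\<exists>y\<in>YY. x = (\<lambda>_. y))"
  proof
    assume H: "(\<forall>i. x i \<in> YY) \<and> (\<forall>i j. i \<le> j \<longrightarrow> x j = x i)"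
    then have "x = (\<lambda>_. x 0)" by (intro ext) (metis le0)
    then show "\<exists>y\<in>YY. x = (\<lambda>_. y)" using H by blast
  next
    assume "\<exists>y\<in>YY. x = (\<lambda>_. y)"
    then show "(\<forall>i. x i \<in> YY) \<and> (\<forall>i j. i \<le> j \<longrightarrow> x j = x i)" by auto
  qed
  finally show "x \<in> topspace LL \<longleftrightarrow> x \<in> {x. \<exists>y\<in>YY. x = (\<lambda>_. y)}" by simp
qed

lemma LL_const: "x \<in> topspace LL \<Longrightarrow> x i = x 0"
  unfolding topspace_LL by auto

lemma cont_proj: "continuous_map LL (TN n) (\<lambda>z. z n)"
  unfolding LL_def projective_limit_def
  by (rule continuous_map_from_subtopology[OF continuous_map_product_projection]) simp

lemma cont_pi0: "continuous_map LL TT (\<lambda>z. z 0)"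
  unfolding continuous_map_def
proof (intro conjI allI impI)
  show "(\<lambda>z. z 0) \<in> topspace LL \<rightarrow> topspace TT" unfolding topspace_LL by auto
  fix U assume "openin TT U"
  then have U: "OpT U" by simp
  show "openin LL {x \<in> topspace LL. x 0 \<in> U}"
  proof (subst openin_subopen, intro ballI)
    fix x assume x: "x \<in> {x \<in> topspace LL. x 0 \<in> U}"
    then obtain n V where V: "OpN n V" "x 0 \<in> V" "V \<subseteq> U" using OpT_local U by blast
    have "openin LL {z \<in> topspace LL. z n \<in> V}"
      by (rule openin_continuous_map_preimage[OF cont_proj]) (simp add: V)
    moreover have "x \<in> {z \<in> topspace LL. z n \<in> V}" using x V(2) LL_const[of x n] by simp
    moreover have "{z \<in> topspace LL. z n \<in> V} \<subseteq> {x \<in> topspace LL. x 0 \<in> U}"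
    proof (intro subsetI)
      fix z assume "z \<in> {z \<in> topspace LL. z n \<in> V}"
      then have z: "z \<in> topspace LL" "z n \<in> V" by auto
      then have "z 0 \<in> V" using LL_const[of z n] by simp
      then show "z \<in> {x \<in> topspace LL. x 0 \<in> U}" using z V(3) by blast
    qed
    ultimately show "\<exists>T. openin LL T \<and> x \<in> T \<and> T \<subseteq> {x \<in> topspace LL. x 0 \<in> U}" by blast
  qed
qed

lemma cont_c: "continuous_map TT LL (\<lambda>y _. y)"
  unfolding LL_def projective_limit_def continuous_map_in_subtopology
proof (intro conjI)
  show "continuous_map TT (product_topology TN UNIV) (\<lambda>y _. y)"
    unfolding continuous_map_componentwise_UNIV
  proof
    fix k
    show "continuous_map TT (TN k) (\<lambda>x. x)"
      unfolding continuous_map_def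
    proof (intro conjI allI impI)
      show "(\<lambda>x. x) \<in> topspace TT \<rightarrow> topspace (TN k)" by simp
      fix U assume "openin (TN k) U"
      then have "OpN k U" by simp
      moreover have "{x \<in> topspace TT. x \<in> U} = U" using \<open>OpN k U\<close> by (auto simp: OpN_def)
      ultimately show "openin TT {x \<in> topspace TT. x \<in> U}" using OpN_OpT by simp
    qed
  qed
  show "(\<lambda>y _. y) \<in> topspace TT \<rightarrow> {x \<in> topspace (product_topology TN UNIV). \<forall>i\<in>UNIV. \<forall>j\<in>UNIV. i \<le> j \<longrightarrow> x j = x i}"
    by (auto simp: PiE_def)
qed

lemma spec_LL: "specializes LL x y \<Longrightarrow> x = y"
proof (rule ccontr)
  assume s: "specializes LL x y" and ne: "x \<noteq> y"
  then have xy: "x \<in> topspace LL" "y \<in> topspace LL" unfolding specializes_def by auto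
  then obtain a b where ab: "a \<in> YY" "b \<in> YY" "x = (\<lambda>_. a)" "y = (\<lambda>_. b)" unfolding topspace_LL by blast
  then have "a \<noteq> b" using ne by auto
  then obtain U where U: "OpT U" "a \<in> U" "b \<notin> U" using sep_TT ab by blast
  have "openin LL {z \<in> topspace LL. z 0 \<in> U}"
    by (rule openin_continuous_map_preimage[OF cont_pi0]) (simp add: U)
  then show False using s U xy ab unfolding specializes_def by auto
qed

lemma sat_LL: "S \<subseteq> topspace LL \<Longrightarrow> saturated_in LL S"
  unfolding saturated_in_def using spec_LL by blast

lemma not_coherent_LL: "\<not> coherent_space LL"
proof
  assume coh: "coherent_space LL"
  define c where "c = (\<lambda>y::nat set set. \<lambda>_::nat. y)"
  have K1: "compactin LL (c ` insert {} (range fp))"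
    unfolding c_def by (rule image_compactin[OF compactin_TT cont_c]) simp
  have K2: "compactin LL (c ` insert {{}} (range fp))"
    unfolding c_def by (rule image_compactin[OF compactin_TT cont_c]) simp
  have "inj c" unfolding c_def inj_def by metis
  then have eq: "c ` insert {} (range fp) \<inter> c ` insert {{}} (range fp) = c ` range fp"
    by (auto simp: inj_eq)
  have "compactin LL (c ` range fp)"
    using coh K1 K2 sat_LL compactin_subset_topspace unfolding coherent_space_def eq[symmetric]
    by metis
  then have "compactin TT ((\<lambda>z. z 0) ` c ` range fp)"
    by (rule image_compactin[OF _ cont_pi0])
  moreover have "(\<lambda>z. z 0) ` c ` range fp = range fp" unfolding c_def by (simp add: image_image)
  ultimately show False using not_compactin_TT by simp
qed

lemma dir_nat: "\<exists>k\<ge>i. (j::nat) \<le> k"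
  by (intro exI[of _ "max i j"]) simp

theorem corollary4p7:
  shows "\<exists>(I :: nat set) le (X :: nat \<Rightarrow> nat set set topology) p.
           projective_system I le X p \<and>
           has_countable_cofinal_subset I le \<and>
           (\<forall>i\<in>I. compact_space (X i) \<and> coherent_space (X i)) \<and>
           \<not> coherent_space (projective_limit I le X p)"
proof (intro exI conjI)
  show "projective_system UNIV (\<le>) TN (\<lambda>i j x. x)"
    unfolding projective_system_def directed_preorder_on_def
  proof (intro conjI ballI impI)
    fix i j :: nat assume "i \<le> j"
    show "continuous_map (TN j) (TN i) (\<lambda>x. x)"
      unfolding continuous_map_def
    proof (intro conjI allI impI)
      show "(\<lambda>x. x) \<in> topspace (TN j) \<rightarrow> topspace (TN i)" by simp
      fix U assume "openin (TN i) U"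
      then have "OpN i U" by simp
      moreover have "{x \<in> topspace (TN j). x \<in> U} = U" using \<open>OpN i U\<close> by (auto simp: OpN_def)
      ultimately show "openin (TN j) {x \<in> topspace (TN j). x \<in> U}" using OpN_mono \<open>i \<le> j\<close> by simp
    qed
  qed (auto intro: le_trans dir_nat)
  show "has_countable_cofinal_subset UNIV ((\<le>) :: nat \<Rightarrow> nat \<Rightarrow> bool)"
    unfolding has_countable_cofinal_subset_def by (intro exI[of _ UNIV]) auto
  show "\<forall>i\<in>UNIV. compact_space (TN i) \<and> coherent_space (TN i)"
    using compact_TN coherent_TN by blast
  show "\<not> coherent_space (projective_limit UNIV (\<le>) TN (\<lambda>i j x. x))"
    using not_coherent_LL unfolding LL_def .
qed

end
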